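(* Let $X$ be a contractible metric space of homological dimension $n$. Let $Y\subset X$, $\alpha\in H_n(X,Y)$ and $S=\operatorname{spt}(\alpha)\subset X\setminus Y$. Let $p\in S$ and $0<r<|p,Y|$. Then for every neighborhood $W$ of $\partial B_r(p)\cap S$ in $X\setminus\{p\}$, the homomorphism $i_*:H_{n-1}(W)\to H_{n-1}(X\setminus\{p\})$ induced by inclusion is non-trivial.
   Context: $H_*$ is singular homology with $\mathbb Z$ coefficients. The homological dimension of $X$ is the supremum of all $n$ such that $H_n(U,V)\ne 0$ for some open pair $V\subset U\subset X$. The support $\operatorname{spt}(\alpha)$ of $\alpha\in H_n(X,Y)$ is the set of points $x\in X\setminus Y$ such that the image of $\alpha$ under $H_n(X,Y)\to H_n(X,X\setminus\{x\})$ is non-trivial. $|p,Y|$ is the distance from $p$ to $Y$, and $\partial B_r(p)=\{x\in X: |p,x|=r\}$. *)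

theory Defs
  imports "HOL-Analysis.Analysis" "HOL-Homology.Homology" "HOL-Library.Extended_Nat" "HOL-Library.Extended_Real"
begin

definition homological_dimension :: "'a topology \<Rightarrow> enat" where
  "homological_dimension X =
     Sup {enat n | n. \<exists>U V. openin X U \<and> openin X V \<and> V \<subseteq> U \<and>
            \<not> trivial_group (relative_homology_group (int n) (subtopology X U) V)}"

definition hsupport :: "int \<Rightarrow> 'a topology \<Rightarrow> 'a set \<Rightarrow> ('a chain) set \<Rightarrow> 'a set" where
  "hsupport n X Y a =
     {x \<in> topspace X - Y.
        hom_induced n X Y X (topspace X - {x}) id a \<noteq> \<one>\<^bsub>relative_homology_group n X (topspace X - {x})\<^esub>}"

end

theory Submission
  imports Defs
begin

lemma mv_zero:
  assumes P: "openin X P" and Q: "openin X Q"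
    and triv: "trivial_group (relative_homology_group (int n + 1) X (P \<union> Q))"
    and g: "\<gamma> \<in> carrier (relative_homology_group (int n) X (P \<inter> Q))"
    and gP: "hom_induced (int n) X (P \<inter> Q) X P id \<gamma> = \<one>\<^bsub>relative_homology_group (int n) X P\<^esub>"
    and gQ: "hom_induced (int n) X (P \<inter> Q) X Q id \<gamma> = \<one>\<^bsub>relative_homology_group (int n) X Q\<^esub>"
  shows "\<gamma> = \<one>\<^bsub>relative_homology_group (int n) X (P \<inter> Q)\<^esub>"
proof -
  have PX: "P \<subseteq> topspace X" and QX: "Q \<subseteq> topspace X" using P Q openin_subset by auto
  have ex3: "kernel (relative_homology_group (int n) X (P \<inter> Q)) (relative_homology_group (int n) X P)
                (hom_induced (int n) X (P \<inter> Q) X P id)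
       = hom_induced (int n) (subtopology X P) (P \<inter> Q) X (P \<inter> Q) id ` carrier (relative_homology_group (int n) (subtopology X P) (P \<inter> Q))"
    using homology_exactness_triple_3[of "P \<inter> Q" P "int n" X] by simp
  have "\<gamma> \<in> kernel (relative_homology_group (int n) X (P \<inter> Q)) (relative_homology_group (int n) X P)
                (hom_induced (int n) X (P \<inter> Q) X P id)"
    using g gP by (simp add: kernel_def)
  then obtain \<delta> where \<delta>: "\<delta> \<in> carrier (relative_homology_group (int n) (subtopology X P) (P \<inter> Q))"
    and g\<delta>: "\<gamma> = hom_induced (int n) (subtopology X P) (P \<inter> Q) X (P \<inter> Q) id \<delta>"
    using ex3 by auto
  have cl: "(subtopology X (P \<union> Q)) closure_of (Q - P) \<subseteq> (subtopology X (P \<union> Q)) interior_of Q"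
  proof -
    have "closedin (subtopology X (P \<union> Q)) (Q - P)"
      unfolding closedin_subtopology
      by (rule exI[of _ "topspace X - P"]) (use P QX in auto)
    moreover have "openin (subtopology X (P \<union> Q)) Q"
      using Q by (simp add: openin_subtopology_Int2[of X Q "P \<union> Q", simplified] Int_absorb2 openin_subtopology_Int_subset)
    ultimately show ?thesis
      by (simp add: closure_of_closedin interior_of_openin)
  qed
  note exc0 = homology_excision_axiom[OF cl, of "P \<union> Q" "int n"]
  have e1: "P \<union> Q - (Q - P) = P" "Q - (Q - P) = P \<inter> Q" by auto
  have e2: "(P \<union> Q) \<inter> P = P" by auto
  have exc: "hom_induced (int n) (subtopology X P) (P \<inter> Q) (subtopology X (P \<union> Q)) Q id
     \<in> iso (relative_homology_group (int n) (subtopology X P) (P \<inter> Q))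
          (relative_homology_group (int n) (subtopology X (P \<union> Q)) Q)"
    using exc0 by (simp add: e1 subtopology_subtopology e2)
  define \<delta>' where "\<delta>' = hom_induced (int n) (subtopology X P) (P \<inter> Q) (subtopology X (P \<union> Q)) Q id \<delta>"
  have c1: "continuous_map (subtopology X P) (subtopology X (P \<union> Q)) id"
    by (simp add: continuous_map_in_subtopology)
  have "hom_induced (int n) (subtopology X (P \<union> Q)) Q X Q id \<delta>'
      = hom_induced (int n) (subtopology X P) (P \<inter> Q) X Q id \<delta>"
    unfolding \<delta>'_def by (subst hom_induced_compose') (use c1 in auto)
  also have "\<dots> = hom_induced (int n) X (P \<inter> Q) X Q id \<gamma>"
    unfolding g\<delta> by (subst hom_induced_compose') auto
  finally have k: "hom_induced (int n) (subtopology X (P \<union> Q)) Q X Q id \<delta>' = \<one>\<^bsub>relative_homology_group (int n) X Q\<^esub>"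
    using gQ by simp
  have ex2: "kernel (relative_homology_group (int n) (subtopology X (P \<union> Q)) Q) (relative_homology_group (int n) X Q)
                (hom_induced (int n) (subtopology X (P \<union> Q)) Q X Q id)
       = hom_relboundary (int n + 1) X (P \<union> Q) Q ` carrier (relative_homology_group (int n + 1) X (P \<union> Q))"
    using homology_exactness_triple_2[of Q "P \<union> Q" "int n + 1" X] by simp
  have "\<delta>' \<in> kernel (relative_homology_group (int n) (subtopology X (P \<union> Q)) Q) (relative_homology_group (int n) X Q)
                (hom_induced (int n) (subtopology X (P \<union> Q)) Q X Q id)"
    using k by (simp add: kernel_def \<delta>'_def hom_induced_carrier)
  then have "\<delta>' \<in> hom_relboundary (int n + 1) X (P \<union> Q) Q ` {\<one>\<^bsub>relative_homology_group (int n + 1) X (P \<union> Q)\<^esub>}"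
    using ex2 triv by (simp add: trivial_group_def)
  then have d1: "\<delta>' = \<one>\<^bsub>relative_homology_group (int n) (subtopology X (P \<union> Q)) Q\<^esub>"
    using group_homomorphism_hom_relboundary[of "int n + 1" X "P \<union> Q" Q]
    by (simp add: hom_one subtopology_subtopology)
  have "\<delta> = \<one>\<^bsub>relative_homology_group (int n) (subtopology X P) (P \<inter> Q)\<^esub>"
  proof -
    interpret gh: group_hom "relative_homology_group (int n) (subtopology X P) (P \<inter> Q)"
       "relative_homology_group (int n) (subtopology X (P \<union> Q)) Q"
       "hom_induced (int n) (subtopology X P) (P \<inter> Q) (subtopology X (P \<union> Q)) Q id"
      using exc by (simp add: group_hom_def group_hom_axioms_def iso_def)
    have "inj_on (hom_induced (int n) (subtopology X P) (P \<inter> Q) (subtopology X (P \<union> Q)) Q id)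
            (carrier (relative_homology_group (int n) (subtopology X P) (P \<inter> Q)))"
      using exc by (simp add: iso_def bij_betw_def)
    then show ?thesis using \<delta> d1 \<delta>'_def
      by (metis gh.hom_one gh.G.one_closed inj_on_def)
  qed
  then show ?thesis
    using g\<delta> by (metis hom_one hom_induced_hom group_relative_homology_group)
qed

lemma chain_compact_support:
  assumes "singular_chain p X c"
  shows "\<exists>K. compactin X K \<and> singular_chain p (subtopology X K) c"
proof -
  define K where "K = (\<Union>f\<in>Poly_Mapping.keys c. f ` standard_simplex p)"
  have "compactin X K"
    unfolding K_def
  proof (rule compactin_Union)
    show "finite ((\<lambda>f. f ` standard_simplex p) ` Poly_Mapping.keys c)" by simp
  next
    fix S assume "S \<in> (\<lambda>f. f ` standard_simplex p) ` Poly_Mapping.keys c"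
    then obtain f where f: "f \<in> Poly_Mapping.keys c" and S: "S = f ` standard_simplex p" by auto
    have "singular_simplex p X f" using assms f by (auto simp: singular_chain_def)
    then have "continuous_map (subtopology (powertop_real UNIV) (standard_simplex p)) X f"
      by (simp add: singular_simplex_def)
    moreover have "compactin (subtopology (powertop_real UNIV) (standard_simplex p)) (standard_simplex p)"
      by (simp add: compactin_subtopology compactin_standard_simplex)
    ultimately show "compactin X S" using S image_compactin by blast
  qed
  moreover have "singular_chain p (subtopology X K) c"
    using assms by (auto simp: singular_chain_subtopology K_def)
  ultimately show ?thesis by blast
qed

theorem corollary4p3:
  fixes M :: "'a set" and d :: "'a \<Rightarrow> 'a \<Rightarrow> real" and n :: nat
    and Y :: "'a set" and \<alpha> :: "('a chain) set" and p :: 'a and r :: real and W :: "'a set"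
  assumes "Metric_space M d"
    and "contractible_space (Metric_space.mtopology M d)"
    and "homological_dimension (Metric_space.mtopology M d) = enat n"
    and "n \<ge> 1"
    and "Y \<subseteq> M"
    and "\<alpha> \<in> carrier (relative_homology_group (int n) (Metric_space.mtopology M d) Y)"
    and "p \<in> hsupport (int n) (Metric_space.mtopology M d) Y \<alpha>"
    and "0 < r"
    and "ereal r < (INF y\<in>Y. ereal (d p y))"
    and "W \<subseteq> M - {p}"
    and "\<exists>U. openin (subtopology (Metric_space.mtopology M d) (M - {p})) U
              \<and> {x \<in> M. d p x = r} \<inter> hsupport (int n) (Metric_space.mtopology M d) Y \<alpha> \<subseteq> U
              \<and> U \<subseteq> W"
  shows "\<exists>a \<in> carrier (homology_group (int n - 1) (subtopology (Metric_space.mtopology M d) W)).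
           hom_induced (int n - 1) (subtopology (Metric_space.mtopology M d) W) {}
                (subtopology (Metric_space.mtopology M d) (M - {p})) {} id a
             \<noteq> \<one>\<^bsub>homology_group (int n - 1) (subtopology (Metric_space.mtopology M d) (M - {p}))\<^esub>"
proof -
  interpret Metric_space M d by fact
  note YM = assms(5)
  define S where "S = hsupport (int n) mtopology Y \<alpha>"
  define van where "van A \<longleftrightarrow> hom_induced (int n) mtopology Y mtopology (M - A) id \<alpha>
      = \<one>\<^bsub>relative_homology_group (int n) mtopology (M - A)\<^esub>" for A
  obtain c where c: "singular_relcycle n mtopology Y c" and \<alpha>c: "\<alpha> = homologous_rel_set n mtopology Y c"
    using assms(6) by (auto simp: carrier_relative_homology_group)
  have cch: "singular_chain n mtopology c" using c by (simp add: singular_relcycle_def)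
  have pS: "p \<in> M" "p \<notin> Y" "\<not> van {p}"
    using assms(7) by (auto simp: hsupport_def van_def)
  have dimtriv: "trivial_group (relative_homology_group (int k) mtopology V)"
    if "openin mtopology V" "n < k" for V k
  proof (rule ccontr)
    assume nt: "\<not> ?thesis"
    have "enat k \<in> {enat n | n. \<exists>U V. openin mtopology U \<and> openin mtopology V \<and> V \<subseteq> U \<and>
            \<not> trivial_group (relative_homology_group (int n) (subtopology mtopology U) V)}"
      using that nt openin_subset[OF that(1)]
      by (intro CollectI exI[of _ k] conjI exI[of _ M] exI[of _ V]) auto
    then have "enat k \<le> homological_dimension mtopology"
      unfolding homological_dimension_def by (rule Sup_upper)
    then show False using assms(3) that by simp
  qed
  have van_chain: "van A \<longleftrightarrow> singular_relboundary n mtopology (M - A) c" if "A \<inter> Y = {}" for A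
  proof -
    have "hom_induced (int n) mtopology Y mtopology (M - A) id \<alpha> = homologous_rel_set n mtopology (M - A) c"
      unfolding \<alpha>c using that YM c cch
      by (subst hom_induced_chain_map) (auto simp: chain_map_ident)
    then show ?thesis
      by (simp add: van_def homologous_rel_set_eq_relboundary)
  qed
  have van_union: "van (A \<union> B)"
    if "closedin mtopology A" "closedin mtopology B" "A \<inter> Y = {}" "B \<inter> Y = {}" "van A" "van B" for A B
  proof -
    have PQ: "(M - A) \<inter> (M - B) = M - (A \<union> B)" "(M - A) \<union> (M - B) = M - (A \<inter> B)" by auto
    define \<gamma> where "\<gamma> = hom_induced (int n) mtopology Y mtopology (M - (A \<union> B)) id \<alpha>"
    have Y1: "Y \<subseteq> M - (A \<union> B)" using YM that by auto
    have g: "\<gamma> \<in> carrier (relative_homology_group (int n) mtopology ((M - A) \<inter> (M - B)))"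
      unfolding \<gamma>_def PQ by (rule hom_induced_carrier)
    have triv: "trivial_group (relative_homology_group (int n + 1) mtopology ((M - A) \<union> (M - B)))"
      using dimtriv[of "M - (A \<inter> B)" "Suc n"] that(1,2) unfolding PQ
      by (auto simp: add.commute)
    have gA: "hom_induced (int n) mtopology ((M - A) \<inter> (M - B)) mtopology (M - A) id \<gamma>
        = hom_induced (int n) mtopology Y mtopology (M - A) id \<alpha>"
      unfolding \<gamma>_def PQ using Y1 by (subst hom_induced_compose') auto
    have gB: "hom_induced (int n) mtopology ((M - A) \<inter> (M - B)) mtopology (M - B) id \<gamma>
        = hom_induced (int n) mtopology Y mtopology (M - B) id \<alpha>"
      unfolding \<gamma>_def PQ using Y1 by (subst hom_induced_compose') auto
    have "\<gamma> = \<one>\<^bsub>relative_homology_group (int n) mtopology ((M - A) \<inter> (M - B))\<^esub>"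
      by (rule mv_zero[OF _ _ triv g]) (use gA gB that in \<open>auto simp: van_def\<close>)
    then show ?thesis unfolding van_def \<gamma>_def PQ .
  qed
  have van_empty: "van {}"
    using van_chain[of "{}"] cch
    by (metis Diff_empty inf_bot_left singular_chain_imp_relboundary subtopology_topspace topspace_mtopology)
  have locvan: "\<exists>e>0. \<forall>\<delta>. 0 < \<delta> \<longrightarrow> \<delta> < e \<longrightarrow> mcball x \<delta> \<inter> Y = {} \<longrightarrow> van (mcball x \<delta>)"
    if xM: "x \<in> M" and "x \<notin> Y" "x \<notin> S" for x
  proof -
    have "van {x}" using that by (auto simp: S_def hsupport_def van_def)
    then have "singular_relboundary n mtopology (M - {x}) c"
      using van_chain[of "{x}"] that by auto
    then obtain dd e where dd: "singular_chain (Suc n) mtopology dd"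
      and e: "singular_chain n (subtopology mtopology (M - {x})) e" and ce: "chain_boundary (Suc n) dd + e = c"
      by (auto simp: singular_relboundary)
    obtain K where K: "compactin (subtopology mtopology (M - {x})) K"
      and eK: "singular_chain n (subtopology (subtopology mtopology (M - {x})) K) e"
      using chain_compact_support[OF e] by blast
    have K1: "compactin mtopology K" "K \<subseteq> M - {x}" using K by (auto simp: compactin_subtopology)
    have "closedin mtopology K" using K1 compactin_imp_closedin Hausdorff_space_mtopology by blast
    then have "openin mtopology (M - K)" by (metis openin_diff openin_topspace topspace_mtopology)
    then obtain \<epsilon> where \<epsilon>: "\<epsilon> > 0" "mball x \<epsilon> \<subseteq> M - K"
      using xM K1 by (auto simp: openin_mtopology)
    show ?thesis
    proof (intro exI[of _ \<epsilon>] conjI allI impI)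
      show "\<epsilon> > 0" by fact
    next
      fix \<delta> assume \<delta>: "0 < \<delta>" "\<delta> < \<epsilon>" "mcball x \<delta> \<inter> Y = {}"
      have "mcball x \<delta> \<subseteq> mball x \<epsilon>" using \<delta> mcball_subset_mball_concentric by blast
      then have "(M - {x}) \<inter> K \<subseteq> M - mcball x \<delta>" using \<epsilon> K1 by auto
      then have "singular_chain n (subtopology mtopology (M - mcball x \<delta>)) e"
        using eK by (metis singular_chain_mono subtopology_subtopology)
      then have "singular_relboundary n mtopology (M - mcball x \<delta>) c"
        using dd ce by (auto simp: singular_relboundary)
      then show "van (mcball x \<delta>)" using van_chain \<delta> by blast
    qed
  qed

  obtain U0 where U0: "openin (subtopology mtopology (M - {p})) U0" "{x\<in>M. d p x = r} \<inter> S \<subseteq> U0" "U0 \<subseteq> W"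
    using assms(11) unfolding S_def by blast
  have Mp_open: "openin mtopology (M - {p})"
  proof -
    have "closedin mtopology {p}"
      using Hausdorff_imp_t1_space[OF Hausdorff_space_mtopology] pS(1) by (metis t1_space_closedin_singleton topspace_mtopology)
    then show ?thesis by (metis openin_diff openin_topspace topspace_mtopology)
  qed
  have U0o: "openin mtopology U0" using openin_trans_full[OF U0(1) Mp_open] .
  have U0M: "U0 \<subseteq> M - {p}" using U0(3) assms(10) by auto
  obtain z where z: "ereal r < z" "z < (INF y\<in>Y. ereal (d p y))" using dense[OF assms(9)] by blast
  then obtain r' where zr: "z = ereal r'" by (cases z) auto
  have rr': "r < r'" using z zr by simp
  have r'Y: "r' < d p y" if "y \<in> Y" for y
  proof -
    have "z < ereal (d p y)" using z(2) INF_lower[OF that, of "\<lambda>y. ereal (d p y)"] by (rule order.strict_trans2)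
    then show ?thesis using zr by simp
  qed
  define \<Sigma> where "\<Sigma> = {x \<in> M. d p x = r}"
  have \<Sigma>eq: "\<Sigma> = mcball p r - mball p r" using pS(1) by (auto simp: \<Sigma>_def)
  have \<Sigma>closed: "closedin mtopology \<Sigma>" unfolding \<Sigma>eq by blast
  have \<Sigma>Y: "\<Sigma> \<inter> Y = {}" using r'Y rr' by (force simp: \<Sigma>_def)
  define A where "A = \<Sigma> - U0"
  have Aclosed: "closedin mtopology A" unfolding A_def using \<Sigma>closed U0o by blast
  obtain K where K: "compactin mtopology K" "singular_chain n (subtopology mtopology K) c"
    using chain_compact_support[OF cch] by blast
  have KM: "K \<subseteq> M" using compactin_subset_topspace[OF K(1)] by simp
  define AK where "AK = A \<inter> K"
  have AKc: "compactin mtopology AK" unfolding AK_def using closed_Int_compactin[OF Aclosed K(1)] .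
  have AKprop: "x \<in> M \<and> x \<notin> Y \<and> x \<notin> S \<and> d p x = r" if "x \<in> AK" for x
    using that U0(2) \<Sigma>Y by (auto simp: AK_def A_def \<Sigma>_def)
  have "\<forall>x\<in>AK. \<exists>e>0. \<forall>\<delta>. 0 < \<delta> \<longrightarrow> \<delta> < e \<longrightarrow> mcball x \<delta> \<inter> Y = {} \<longrightarrow> van (mcball x \<delta>)"
    using locvan AKprop by blast
  then obtain eps where eps: "\<And>x. x \<in> AK \<Longrightarrow> eps x > 0 \<and> (\<forall>\<delta>. 0 < \<delta> \<longrightarrow> \<delta> < eps x \<longrightarrow> mcball x \<delta> \<inter> Y = {} \<longrightarrow> van (mcball x \<delta>))"
    by metis
  define rad where "rad x = min (eps x) (min (r' - r) r) / 2" for x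
  have rad: "0 < rad x \<and> rad x < eps x \<and> rad x < r' - r \<and> rad x < r" if "x \<in> AK" for x
    using eps[OF that] rr' assms(8) by (auto simp: rad_def)
  have ballY: "mcball x (rad x) \<inter> Y = {}" if "x \<in> AK" for x
  proof (rule ccontr)
    assume "mcball x (rad x) \<inter> Y \<noteq> {}"
    then obtain y where y: "y \<in> Y" "y \<in> M" "d x y \<le> rad x" by auto
    have "d p y \<le> d p x + d x y" using triangle[of p x y] pS(1) AKprop[OF that] y by auto
    then show False using r'Y[OF y(1)] rad[OF that] AKprop[OF that] y by auto
  qed
  have ballp: "p \<notin> mcball x (rad x)" if "x \<in> AK" for x
    using rad[OF that] AKprop[OF that] commute[of x p] by auto
  have vanball: "van (mcball x (rad x))" if "x \<in> AK" for x
    using eps[OF that] rad[OF that] ballY[OF that] by blast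
  have cover: "AK \<subseteq> \<Union>((\<lambda>x. mball x (rad x)) ` AK)"
    using rad AKprop by fastforce
  obtain V where V: "finite V" "V \<subseteq> (\<lambda>x. mball x (rad x)) ` AK" "AK \<subseteq> \<Union>V"
    using AKc cover unfolding compactin_def
    by (metis (no_types, lifting) imageE openin_mball)
  then obtain F where F: "F \<subseteq> AK" "finite F" "V = (\<lambda>x. mball x (rad x)) ` F"
    using finite_subset_image by metis
  define B where "B = (\<Union>x\<in>F. mcball x (rad x))"
  have Bprop: "van (\<Union>x\<in>F'. mcball x (rad x)) \<and> closedin mtopology (\<Union>x\<in>F'. mcball x (rad x))
       \<and> (\<Union>x\<in>F'. mcball x (rad x)) \<inter> Y = {}" if "finite F'" "F' \<subseteq> AK" for F'
    using that
  proof (induction F' rule: finite_induct)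
    case empty
    then show ?case using van_empty by simp
  next
    case (insert x F')
    then have IH: "van (\<Union>x\<in>F'. mcball x (rad x))" "closedin mtopology (\<Union>x\<in>F'. mcball x (rad x))"
       "(\<Union>x\<in>F'. mcball x (rad x)) \<inter> Y = {}" and xAK: "x \<in> AK" by auto
    have "van (mcball x (rad x) \<union> (\<Union>x\<in>F'. mcball x (rad x)))"
      by (rule van_union) (use IH vanball[OF xAK] ballY[OF xAK] in auto)
    then show ?case using IH ballY[OF xAK] by auto
  qed
  have B: "van B" "closedin mtopology B" "B \<inter> Y = {}"
    using Bprop[OF F(2,1)] unfolding B_def by auto
  define A2 where "A2 = A - (\<Union>x\<in>F. mball x (rad x))"
  have A2closed: "closedin mtopology A2" unfolding A2_def using Aclosed by blast
  have A2K: "A2 \<inter> K = {}" using V F by (auto simp: A2_def AK_def)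
  have A2Y: "A2 \<inter> Y = {}" using \<Sigma>Y by (auto simp: A2_def A_def)
  have vanA2: "van A2"
  proof -
    have "singular_chain n (subtopology mtopology (M - A2)) c"
      using K(2) A2K KM by (auto intro: singular_chain_mono)
    then show ?thesis using van_chain[OF A2Y] singular_chain_imp_relboundary by blast
  qed
  define A' where "A' = A2 \<union> B"
  have vanA': "van A'" unfolding A'_def by (rule van_union) (use A2closed A2Y vanA2 B in auto)
  have A'closed: "closedin mtopology A'" unfolding A'_def using A2closed B by blast
  define G where "G = M - A'"
  have Gopen: "openin mtopology G" unfolding G_def using A'closed
    by (metis openin_diff openin_topspace topspace_mtopology)
  have GM: "G \<subseteq> M" by (auto simp: G_def)
  have YG: "Y \<subseteq> G" using YM B A2Y by (auto simp: G_def A'_def)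
  have pG: "p \<in> G"
  proof -
    have "p \<notin> A" using assms(8) pS(1) by (auto simp: A_def \<Sigma>_def)
    moreover have "p \<notin> B" using ballp F(1) by (auto simp: B_def)
    ultimately show ?thesis using pS(1) by (auto simp: G_def A'_def A2_def)
  qed
  have \<Sigma>G: "\<Sigma> \<inter> G \<subseteq> U0"
  proof
    fix x assume x: "x \<in> \<Sigma> \<inter> G"
    show "x \<in> U0"
    proof (rule ccontr)
      assume "x \<notin> U0"
      then have xA: "x \<in> A" using x by (auto simp: A_def)
      have "x \<in> A'"
      proof (cases "x \<in> (\<Union>x\<in>F. mball x (rad x))")
        case True
        then show ?thesis using mball_subset_mcball by (fastforce simp: A'_def B_def)
      next
        case False
        then show ?thesis using xA by (auto simp: A'_def A2_def)
      qed
      then show False using x by (auto simp: G_def)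
    qed
  qed
  have vanG: "hom_induced (int n) mtopology Y mtopology G id \<alpha> = \<one>\<^bsub>relative_homology_group (int n) mtopology G\<^esub>"
    using vanA' by (simp add: van_def G_def)

  have ex3: "kernel (relative_homology_group (int n) mtopology Y) (relative_homology_group (int n) mtopology G)
                (hom_induced (int n) mtopology Y mtopology G id)
       = hom_induced (int n) (subtopology mtopology G) Y mtopology Y id ` carrier (relative_homology_group (int n) (subtopology mtopology G) Y)"
    using homology_exactness_triple_3[OF YG, of "int n" mtopology] by simp
  have "\<alpha> \<in> kernel (relative_homology_group (int n) mtopology Y) (relative_homology_group (int n) mtopology G)
                (hom_induced (int n) mtopology Y mtopology G id)"
    using assms(6) vanG by (simp add: kernel_def)
  then obtain \<alpha>2 where \<alpha>2: "\<alpha>2 \<in> carrier (relative_homology_group (int n) (subtopology mtopology G) Y)"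
    and \<alpha>\<alpha>2: "\<alpha> = hom_induced (int n) (subtopology mtopology G) Y mtopology Y id \<alpha>2"
    using ex3 by auto
  define C where "C = mcball p r"
  define E where "E = (G - C) \<union> (U0 \<inter> G)"
  define Cg where "Cg = G \<inter> C"
  define Ug where "Ug = U0 \<inter> G \<inter> C"
  have EG: "E \<subseteq> G" by (auto simp: E_def)
  have Eopen: "openin mtopology E" unfolding E_def C_def using Gopen U0o by blast
  have cl: "(subtopology mtopology G) closure_of (G - C) \<subseteq> (subtopology mtopology G) interior_of E"
  proof -
    have "closedin (subtopology mtopology G) (G - mball p r)"
      unfolding closedin_subtopology
      by (rule exI[of _ "M - mball p r"]) (use GM in auto)
    then have "(subtopology mtopology G) closure_of (G - C) \<subseteq> G - mball p r"
      by (rule closure_of_minimal[rotated]) (use mball_subset_mcball in \<open>auto simp: C_def\<close>)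
    also have "\<dots> \<subseteq> E"
    proof
      fix x assume x: "x \<in> G - mball p r"
      show "x \<in> E"
      proof (cases "x \<in> C")
        case True
        then have "x \<in> \<Sigma> \<inter> G" using x pS(1) by (auto simp: C_def \<Sigma>_def)
        then show ?thesis using \<Sigma>G x by (auto simp: E_def)
      qed (use x in \<open>auto simp: E_def\<close>)
    qed
    also have "\<dots> = (subtopology mtopology G) interior_of E"
    proof -
      have "openin (subtopology mtopology G) E"
        unfolding openin_subtopology by (rule exI[of _ E]) (use Eopen EG in auto)
      then show ?thesis by (simp add: interior_of_openin)
    qed
    finally show ?thesis .
  qed
  note exc0 = homology_excision_axiom[OF cl EG, of "int n"]
  have se1: "subtopology (subtopology mtopology G) (G - (G - C)) = subtopology mtopology Cg"
  proof -
    have "G \<inter> (G - (G - C)) = Cg" by (auto simp: Cg_def)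
    then show ?thesis by (simp add: subtopology_subtopology)
  qed
  have se2: "subtopology (subtopology mtopology G) G = subtopology mtopology G"
    by (simp add: subtopology_subtopology)
  have se3: "E - (G - C) = Ug" by (auto simp: E_def Ug_def)
  have exc: "hom_induced (int n) (subtopology mtopology Cg) Ug (subtopology mtopology G) E id
     \<in> iso (relative_homology_group (int n) (subtopology mtopology Cg) Ug)
          (relative_homology_group (int n) (subtopology mtopology G) E)"
    using exc0 unfolding se1 se2 se3 .
  have YE: "Y \<subseteq> E"
  proof
    fix y assume y: "y \<in> Y"
    then have "y \<notin> C" using r'Y[OF y] rr' by (auto simp: C_def)
    then show "y \<in> E" using YG y by (auto simp: E_def)
  qed
  have pC: "p \<in> C" using pS(1) assms(8) by (simp add: C_def)
  have EMp: "E \<subseteq> M - {p}" using pC U0M GM by (auto simp: E_def)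
  have UgW: "Ug \<subseteq> W" using U0(3) by (auto simp: Ug_def)
  have UgCg: "Ug \<subseteq> Cg" by (auto simp: Ug_def Cg_def)
  have CgG: "Cg \<subseteq> G" by (auto simp: Cg_def)
  have UgE: "Ug \<subseteq> E" by (auto simp: Ug_def E_def)
  have UgMp: "Ug \<subseteq> M - {p}" using UgE EMp by auto
  define \<alpha>E where "\<alpha>E = hom_induced (int n) (subtopology mtopology G) Y (subtopology mtopology G) E id \<alpha>2"
  have "\<alpha>E \<in> hom_induced (int n) (subtopology mtopology Cg) Ug (subtopology mtopology G) E id
            ` carrier (relative_homology_group (int n) (subtopology mtopology Cg) Ug)"
    using exc unfolding iso_def bij_betw_def \<alpha>E_def by (simp add: hom_induced_carrier)
  then obtain \<zeta> where \<zeta>: "\<zeta> \<in> carrier (relative_homology_group (int n) (subtopology mtopology Cg) Ug)"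
    and \<zeta>E: "\<alpha>E = hom_induced (int n) (subtopology mtopology Cg) Ug (subtopology mtopology G) E id \<zeta>"
    by auto
  define \<alpha>p where "\<alpha>p = hom_induced (int n) mtopology Y mtopology (M - {p}) id \<alpha>"
  have cGG: "continuous_map (subtopology mtopology G) (subtopology mtopology G) id" by simp
  have cCgG: "continuous_map (subtopology mtopology Cg) (subtopology mtopology G) id"
    using CgG by (auto simp: continuous_map_in_subtopology)
  have "\<alpha>p = hom_induced (int n) (subtopology mtopology G) Y mtopology (M - {p}) id \<alpha>2"
    unfolding \<alpha>p_def \<alpha>\<alpha>2 using YM pS(2) by (subst hom_induced_compose') auto
  also have "\<dots> = hom_induced (int n) (subtopology mtopology G) E mtopology (M - {p}) id \<alpha>E"
    unfolding \<alpha>E_def using YE EMp by (subst hom_induced_compose'[OF cGG]) auto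
  also have "\<dots> = hom_induced (int n) (subtopology mtopology Cg) Ug mtopology (M - {p}) id \<zeta>"
    unfolding \<zeta>E using UgE EMp by (subst hom_induced_compose'[OF cCgG]) auto
  finally have \<alpha>p\<zeta>: "\<alpha>p = hom_induced (int n) (subtopology mtopology Cg) Ug mtopology (M - {p}) id \<zeta>" .
  have se4: "subtopology (subtopology mtopology Cg) Ug = subtopology mtopology Ug"
    using UgCg by (simp add: subtopology_subtopology Int_absorb1)
  have nat: "hom_boundary (int n) mtopology (M - {p}) \<alpha>p
      = hom_induced (int n - 1) (subtopology mtopology Ug) {} (subtopology mtopology (M - {p})) {} id
           (hom_boundary (int n) (subtopology mtopology Cg) Ug \<zeta>)"
  proof -
    have idp: "id \<in> Ug \<rightarrow> M - {p}" using UgMp by auto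
    show ?thesis
      using fun_cong[OF naturality_hom_induced[of "subtopology mtopology Cg" mtopology id Ug "M - {p}" "int n", OF continuous_map_id_subt idp], of \<zeta>]
      unfolding \<alpha>p\<zeta> se4 comp_def by simp
  qed
  define a0 where "a0 = hom_boundary (int n) (subtopology mtopology Cg) Ug \<zeta>"
  have a0c: "a0 \<in> carrier (homology_group (int n - 1) (subtopology mtopology Ug))"
    unfolding a0_def using hom_boundary_carrier[of "int n" "subtopology mtopology Cg" Ug \<zeta>] se4 by simp
  define a where "a = hom_induced (int n - 1) (subtopology mtopology Ug) {} (subtopology mtopology W) {} id a0"
  have cUW: "continuous_map (subtopology mtopology Ug) (subtopology mtopology W) id"
    using UgW by (auto simp: continuous_map_in_subtopology)
  have aim: "hom_induced (int n - 1) (subtopology mtopology W) {} (subtopology mtopology (M - {p})) {} id a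
      = hom_boundary (int n) mtopology (M - {p}) \<alpha>p"
    unfolding nat a_def a0_def[symmetric] using assms(10)
    by (subst hom_induced_compose'[OF cUW]) (auto simp: continuous_map_in_subtopology)
  have bnd: "hom_boundary (int n) mtopology (M - {p}) \<alpha>p
      \<noteq> \<one>\<^bsub>homology_group (int n - 1) (subtopology mtopology (M - {p}))\<^esub>"
  proof
    assume b1: "hom_boundary (int n) mtopology (M - {p}) \<alpha>p
      = \<one>\<^bsub>homology_group (int n - 1) (subtopology mtopology (M - {p}))\<^esub>"
    have ex1: "kernel (relative_homology_group (int n) mtopology (M - {p}))
                      (homology_group (int n - 1) (subtopology mtopology (M - {p})))
                      (hom_boundary (int n) mtopology (M - {p}))
        = hom_induced (int n) mtopology {} mtopology (M - {p}) id ` carrier (homology_group (int n) mtopology)"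
      using homology_exactness_axiom_1[of "int n" mtopology "M - {p}"] by simp
    have "trivial_group (homology_group (int n) mtopology)"
      using trivial_reduced_homology_group_contractible_space[OF assms(2), of "int n"]
        un_reduced_homology_group[of "int n" mtopology] assms(4) by simp
    then have "carrier (homology_group (int n) mtopology) = {\<one>\<^bsub>homology_group (int n) mtopology\<^esub>}"
      by (simp add: trivial_group_def)
    then have "hom_induced (int n) mtopology {} mtopology (M - {p}) id ` carrier (homology_group (int n) mtopology)
       = {\<one>\<^bsub>relative_homology_group (int n) mtopology (M - {p})\<^esub>}"
      by (metis (no_types, lifting) group_relative_homology_group hom_induced_hom hom_one image_empty image_insert)
    moreover have "\<alpha>p \<in> kernel (relative_homology_group (int n) mtopology (M - {p}))
                      (homology_group (int n - 1) (subtopology mtopology (M - {p})))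
                      (hom_boundary (int n) mtopology (M - {p}))"
      using b1 by (simp add: kernel_def \<alpha>p_def hom_induced_carrier)
    ultimately have "\<alpha>p = \<one>\<^bsub>relative_homology_group (int n) mtopology (M - {p})\<^esub>"
      using ex1 by auto
    then show False using pS(3) by (simp add: van_def \<alpha>p_def)
  qed
  show ?thesis
  proof (rule bexI[of _ a])
    show "a \<in> carrier (homology_group (int n - 1) (subtopology mtopology W))"
      unfolding a_def by (rule hom_induced_carrier)
    show "hom_induced (int n - 1) (subtopology mtopology W) {} (subtopology mtopology (M - {p})) {} id a
      \<noteq> \<one>\<^bsub>homology_group (int n - 1) (subtopology mtopology (M - {p}))\<^esub>"
      using aim bnd by simp
  qed
qed

end
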